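(* Let $X$ be a topological space, $Y$ a topological space, $(Z,d)$ a metric space and $f:X\times Y\to Z$ a mapping. (a) If $Y$ has a countable base and, for each $x\in X$, $f_x$ is continuous and there is a dense set $D_x\subset Y$ such that $f^y$ is quasicontinuous at $x$ for every $y\in D_x$, then there is a residual set $R\subset X$ such that $f$ is continuous at every point of $R\times Y$. (b) If $Y$ has a countable pseudobase and, for each $x\in X$, $f_x$ is quasicontinuous and there is a dense set $D_x\subset Y$ such that $f^y$ is quasicontinuous at $x$ for every $y\in D_x$, then there is a residual set $R\subset X$ such that $f$ is quasicontinuous with respect to the variable $x$ at every point of $R\times Y$.
   Context: $f_x(y)=f^y(x)=f(x,y)$. A mapping $g$ is quasicontinuous at $a$ if for each neighborhood $U$ of $a$ and neighborhood $W$ of $g(a)$ there is an open $O$ with $\emptyset\ne O\subset U$ and $g(O)\subset W$; quasicontinuous means at every point. $f$ is quasicontinuous with respect to the variable $x$ at $(a,b)$ if for each neighborhood $V$ of $b$ and $\varepsilon>0$ there are a neighborhood $U$ of $a$ and an open $O\subset Y$ with $\emptyset\ne O\subset V$ and $d(f(a,b),f(x,y))\le\varepsilon$ for all $x\in U$, $y\in O$. A pseudobase of $Y$ is a collection of nonempty open sets such that every nonempty open set contains one of them. Residual means containing a countable intersection of dense open sets. *)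

theory Defs
  imports "HOL-Analysis.Analysis"
begin

definition quasicont_at :: "('a::topological_space \<Rightarrow> 'b::topological_space) \<Rightarrow> 'a \<Rightarrow> bool" where
  "quasicont_at g a \<longleftrightarrow>
     (\<forall>U W. open U \<and> a \<in> U \<and> open W \<and> g a \<in> W \<longrightarrow>
        (\<exists>Q. open Q \<and> Q \<noteq> {} \<and> Q \<subseteq> U \<and> g ` Q \<subseteq> W))"

definition quasicont :: "('a::topological_space \<Rightarrow> 'b::topological_space) \<Rightarrow> bool" where
  "quasicont g \<longleftrightarrow> (\<forall>a. quasicont_at g a)"

definition quasicont_wrt_x ::
  "('a::topological_space \<times> 'b::topological_space \<Rightarrow> 'c::metric_space) \<Rightarrow> 'a \<Rightarrow> 'b \<Rightarrow> bool" where
  "quasicont_wrt_x f a b \<longleftrightarrow>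
     (\<forall>V \<epsilon>. open V \<and> b \<in> V \<and> \<epsilon> > 0 \<longrightarrow>
        (\<exists>U Q. open U \<and> a \<in> U \<and> open Q \<and> Q \<noteq> {} \<and> Q \<subseteq> V \<and>
               (\<forall>x\<in>U. \<forall>y\<in>Q. dist (f (a, b)) (f (x, y)) \<le> \<epsilon>)))"

definition pseudobase :: "'a::topological_space set set \<Rightarrow> bool" where
  "pseudobase P \<longleftrightarrow> (\<forall>p\<in>P. open p \<and> p \<noteq> {}) \<and>
     (\<forall>S. open S \<and> S \<noteq> {} \<longrightarrow> (\<exists>p\<in>P. p \<subseteq> S))"

definition dense_set :: "'a::topological_space set \<Rightarrow> bool" where
  "dense_set D \<longleftrightarrow> closure D = UNIV"

definition residual :: "'a::topological_space set \<Rightarrow> bool" where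
  "residual R \<longleftrightarrow> (\<exists>\<G>. countable \<G> \<and> (\<forall>G\<in>\<G>. open G \<and> dense_set G) \<and> \<Inter>\<G> \<subseteq> R)"

end

theory Submission
  imports Defs
begin

definition Aset :: "('a::topological_space \<times> 'b::topological_space \<Rightarrow> 'c::metric_space) \<Rightarrow> 'b set \<Rightarrow> real \<Rightarrow> 'a set" where
  "Aset f p e = {x. \<forall>z1\<in>p. \<forall>z2\<in>p. dist (f (x,z1)) (f (x,z2)) \<le> e}"

definition Oset :: "('a::topological_space \<times> 'b::topological_space \<Rightarrow> 'c::metric_space) \<Rightarrow> 'b set \<Rightarrow> real \<Rightarrow> 'a set" where
  "Oset f p e = {x. \<exists>U. open U \<and> x \<in> U \<and>
      (\<forall>x1\<in>U. \<forall>x2\<in>U. \<forall>z1\<in>p. \<forall>z2\<in>p. dist (f (x1,z1)) (f (x2,z2)) \<le> e)}"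

definition Gset where
  "Gset f p e = Oset f p e \<union> - closure (Aset f p (e/4))"

lemma open_Oset: "open (Oset f p e)"
proof (subst open_subopen, intro ballI)
  fix x assume "x \<in> Oset f p e"
  then obtain U where U: "open U" "x \<in> U"
    "\<forall>x1\<in>U. \<forall>x2\<in>U. \<forall>z1\<in>p. \<forall>z2\<in>p. dist (f (x1,z1)) (f (x2,z2)) \<le> e"
    unfolding Oset_def by blast
  then have "U \<subseteq> Oset f p e" unfolding Oset_def by blast
  with U show "\<exists>T. open T \<and> x \<in> T \<and> T \<subseteq> Oset f p e" by blast
qed

lemma open_Gset: "open (Gset f p e)"
  unfolding Gset_def by (intro open_Un open_Oset) auto

lemma dense_meet:
  assumes "dense_set D" "open V" "V \<noteq> {}"
  shows "V \<inter> D \<noteq> {}"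
  using assms open_Int_closure_eq_empty[of V D] unfolding dense_set_def by auto

lemma dense_Gset:
  fixes f :: "'a::topological_space \<times> 'b::topological_space \<Rightarrow> 'c::metric_space"
  assumes qf: "\<And>x. quasicont (\<lambda>y. f (x, y))"
    and dD: "\<And>x. dense_set (D x)"
    and qD: "\<And>x y. y \<in> D x \<Longrightarrow> quasicont_at (\<lambda>x'. f (x', y)) x"
    and p: "open p" and e: "e > 0"
  shows "dense_set (Gset f p e)"
proof -
  let ?A = "Aset f p (e/4)"
  have "\<forall>W. open W \<and> W \<noteq> {} \<longrightarrow> W \<inter> Gset f p e \<noteq> {}"
  proof (intro allI impI)
    fix W :: "'a set" assume W: "open W \<and> W \<noteq> {}"
    show "W \<inter> Gset f p e \<noteq> {}"
    proof (cases "W \<subseteq> closure ?A")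
      case False thus ?thesis unfolding Gset_def by blast
    next
      case True
      have WA: "\<And>S. open S \<Longrightarrow> S \<noteq> {} \<Longrightarrow> S \<subseteq> W \<Longrightarrow> S \<inter> ?A \<noteq> {}"
        using True open_Int_closure_eq_empty by blast
      show ?thesis
      proof (cases "p = {}")
        case True
        then have "Oset f p e = UNIV" unfolding Oset_def by auto
        then show ?thesis using W unfolding Gset_def by auto
      next
        case pne: False
        obtain x0 where x0: "x0 \<in> W" "x0 \<in> ?A" using WA[of W] W by blast
        obtain y1 where y1: "y1 \<in> p" "y1 \<in> D x0" using dense_meet[OF dD p pne] by blast
        have "quasicont_at (\<lambda>x'. f (x', y1)) x0" using qD y1 by blast
        then obtain Q where Q: "open Q" "Q \<noteq> {}" "Q \<subseteq> W"
          "(\<lambda>x'. f (x', y1)) ` Q \<subseteq> ball (f (x0,y1)) (e/4)"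
          unfolding quasicont_at_def using W x0 e
          by (metis centre_in_ball open_ball zero_less_divide_iff zero_less_numeral)
        have c1: "dist (f (x',z)) (f (x0,y1)) \<le> e/2" if "x' \<in> Q" "x' \<in> ?A" "z \<in> p" for x' z
        proof -
          have "dist (f (x',z)) (f (x',y1)) \<le> e/4" using that y1 unfolding Aset_def by blast
          moreover have "dist (f (x',y1)) (f (x0,y1)) < e/4" using Q(4) that
            by (auto simp: dist_commute)
          ultimately show ?thesis using dist_triangle[of "f (x',z)" "f (x0,y1)" "f (x',y1)"] by linarith
        qed
        have c2: "dist (f (x',z)) (f (x0,y1)) \<le> e/2" if xq: "x' \<in> Q" and zp: "z \<in> p" for x' z
        proof (rule field_le_epsilon)
          fix t :: real assume t: "t > 0"
          define d where "d = t/2"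
          have d: "d > 0" using t d_def by simp
          have "quasicont_at (\<lambda>y. f (x', y)) z" using qf unfolding quasicont_def by blast
          then obtain Q1 where Q1: "open Q1" "Q1 \<noteq> {}" "Q1 \<subseteq> p"
            "(\<lambda>y. f (x', y)) ` Q1 \<subseteq> ball (f (x',z)) d"
            unfolding quasicont_at_def using p zp d
            by (metis centre_in_ball open_ball)
          obtain y2 where y2: "y2 \<in> Q1" "y2 \<in> D x'" using dense_meet[OF dD Q1(1,2)] by blast
          have "quasicont_at (\<lambda>x''. f (x'', y2)) x'" using qD y2 by blast
          then obtain Q2 where Q2: "open Q2" "Q2 \<noteq> {}" "Q2 \<subseteq> Q"
            "(\<lambda>x''. f (x'', y2)) ` Q2 \<subseteq> ball (f (x',y2)) d"
            unfolding quasicont_at_def using Q xq d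
            by (metis centre_in_ball open_ball)
          obtain x3 where x3: "x3 \<in> Q2" "x3 \<in> ?A" using WA[OF Q2(1,2)] Q2(3) Q(3) by blast
          have "dist (f (x3,y2)) (f (x0,y1)) \<le> e/2" using c1[of x3 y2] x3 Q2(3) y2 Q1(3) by blast
          moreover have "dist (f (x',y2)) (f (x3,y2)) < d" using Q2(4) x3 by auto
          moreover have "dist (f (x',z)) (f (x',y2)) < d" using Q1(4) y2 by auto
          ultimately show "dist (f (x',z)) (f (x0,y1)) \<le> e/2 + t"
            using dist_triangle[of "f (x',z)" "f (x0,y1)" "f (x',y2)"]
              dist_triangle[of "f (x',y2)" "f (x0,y1)" "f (x3,y2)"] d_def by linarith
        qed
        have "Q \<subseteq> Oset f p e"
        proof
          fix x assume "x \<in> Q"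
          have "\<forall>x1\<in>Q. \<forall>x2\<in>Q. \<forall>z1\<in>p. \<forall>z2\<in>p. dist (f (x1,z1)) (f (x2,z2)) \<le> e"
          proof (intro ballI)
            fix x1 x2 z1 z2 assume "x1 \<in> Q" "x2 \<in> Q" "z1 \<in> p" "z2 \<in> p"
            then have "dist (f (x1,z1)) (f (x0,y1)) \<le> e/2" "dist (f (x2,z2)) (f (x0,y1)) \<le> e/2"
              using c2 by auto
            then show "dist (f (x1,z1)) (f (x2,z2)) \<le> e"
              using dist_triangle2[of "f (x1,z1)" "f (x2,z2)" "f (x0,y1)"] by linarith
          qed
          with \<open>x \<in> Q\<close> Q(1) show "x \<in> Oset f p e" unfolding Oset_def by blast
        qed
        then show ?thesis using Q unfolding Gset_def by blast
      qed
    qed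
  qed
  then have "- closure (Gset f p e) = {}"
    using closure_subset[of "Gset f p e"] by blast
  then show ?thesis unfolding dense_set_def by blast
qed

lemma residual_lemma:
  fixes f :: "'a::topological_space \<times> 'b::topological_space \<Rightarrow> 'c::metric_space"
  assumes qf: "\<And>x. quasicont (\<lambda>y. f (x, y))"
    and dD: "\<And>x. dense_set (D x)"
    and qD: "\<And>x y. y \<in> D x \<Longrightarrow> quasicont_at (\<lambda>x'. f (x', y)) x"
    and P: "countable P" "\<And>p. p \<in> P \<Longrightarrow> open p"
  shows "\<exists>R. residual R \<and> (\<forall>x\<in>R. \<forall>p\<in>P. \<forall>k::nat.
           x \<in> Aset f p (1 / real (Suc k) / 4) \<longrightarrow> x \<in> Oset f p (1 / real (Suc k)))"
proof -
  define \<G> where "\<G> = (\<lambda>(p,k::nat). Gset f p (1 / real (Suc k))) ` (P \<times> UNIV)"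
  have "countable \<G>" unfolding \<G>_def using P(1) by auto
  moreover have "\<forall>G\<in>\<G>. open G \<and> dense_set G"
    unfolding \<G>_def using open_Gset dense_Gset[OF qf dD qD P(2)] by auto
  ultimately have "residual (\<Inter>\<G>)" unfolding residual_def by blast
  moreover have "\<forall>x\<in>\<Inter>\<G>. \<forall>p\<in>P. \<forall>k::nat.
           x \<in> Aset f p (1 / real (Suc k) / 4) \<longrightarrow> x \<in> Oset f p (1 / real (Suc k))"
  proof (intro ballI allI impI)
    fix x p k assume x: "x \<in> \<Inter>\<G>" and p: "p \<in> P" and xA: "x \<in> Aset f p (1 / real (Suc k) / 4)"
    have "x \<in> Gset f p (1 / real (Suc k))" using x p unfolding \<G>_def by auto
    then show "x \<in> Oset f p (1 / real (Suc k))" using xA closure_subset unfolding Gset_def by blast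
  qed
  ultimately show ?thesis by blast
qed

lemma small_k: "e > 0 \<Longrightarrow> \<exists>k::nat. 1 / real (Suc k) < e"
proof -
  assume "e > 0"
  then obtain n :: nat where "n \<noteq> 0" "inverse (real n) < e" using real_arch_inverse by blast
  then show ?thesis by (intro exI[of _ "n - 1"]) (simp add: divide_inverse)
qed

theorem corollary3p7:
  fixes f :: "'a::topological_space \<times> 'b::topological_space \<Rightarrow> 'c::metric_space"
  shows
   "((\<exists>B::'b set set. countable B \<and> topological_basis B) \<and>
     (\<forall>x. continuous_on UNIV (\<lambda>y. f (x, y)) \<and>
          (\<exists>D. dense_set D \<and> (\<forall>y\<in>D. quasicont_at (\<lambda>x'. f (x', y)) x)))
     \<longrightarrow> (\<exists>R. residual R \<and> (\<forall>x\<in>R. \<forall>y. (f \<longlongrightarrow> f (x, y)) (at (x, y)))))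
    \<and>
    ((\<exists>P::'b set set. countable P \<and> pseudobase P) \<and>
     (\<forall>x. quasicont (\<lambda>y. f (x, y)) \<and>
          (\<exists>D. dense_set D \<and> (\<forall>y\<in>D. quasicont_at (\<lambda>x'. f (x', y)) x)))
     \<longrightarrow> (\<exists>R. residual R \<and> (\<forall>x\<in>R. \<forall>y. quasicont_wrt_x f x y)))"
proof (intro conjI impI)
  assume H: "(\<exists>B::'b set set. countable B \<and> topological_basis B) \<and>
     (\<forall>x. continuous_on UNIV (\<lambda>y. f (x, y)) \<and>
          (\<exists>D. dense_set D \<and> (\<forall>y\<in>D. quasicont_at (\<lambda>x'. f (x', y)) x)))"
  then obtain B :: "'b set set" where B: "countable B" "topological_basis B" by blast
  have cont: "\<And>x. continuous_on UNIV (\<lambda>y. f (x, y))" using H by blast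
  obtain D where D: "\<And>x. dense_set (D x)" "\<And>x y. y \<in> D x \<Longrightarrow> quasicont_at (\<lambda>x'. f (x', y)) x"
    using H by metis
  have ov: "open ((\<lambda>y. f (x, y)) -` W)" if "open W" for x W
    using cont[of x] that continuous_on_open_vimage[of UNIV] by auto
  have qf: "quasicont (\<lambda>y. f (x, y))" for x
    unfolding quasicont_def quasicont_at_def
  proof (intro allI impI)
    fix a U W assume a: "open U \<and> a \<in> U \<and> open W \<and> f (x, a) \<in> W"
    show "\<exists>Q. open Q \<and> Q \<noteq> {} \<and> Q \<subseteq> U \<and> (\<lambda>y. f (x, y)) ` Q \<subseteq> W"
      by (rule exI[of _ "U \<inter> (\<lambda>y. f (x, y)) -` W"]) (use a ov[of W x] in auto)
  qed
  have Bo: "\<And>p. p \<in> B \<Longrightarrow> open p" using B(2) topological_basis_open by blast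
  obtain R where R: "residual R" "\<forall>x\<in>R. \<forall>p\<in>B. \<forall>k::nat.
           x \<in> Aset f p (1 / real (Suc k) / 4) \<longrightarrow> x \<in> Oset f p (1 / real (Suc k))"
    using residual_lemma[of f D B, OF qf D(1) D(2) B(1) Bo] by blast
  have "\<forall>x\<in>R. \<forall>y. (f \<longlongrightarrow> f (x, y)) (at (x, y))"
  proof (intro ballI allI)
    fix x y assume xR: "x \<in> R"
    show "(f \<longlongrightarrow> f (x, y)) (at (x, y))"
      unfolding tendsto_iff
    proof (intro allI impI)
      fix \<epsilon> :: real assume "\<epsilon> > 0"
      then obtain k :: nat where k: "1 / real (Suc k) < \<epsilon>" using small_k by blast
      define e where "e = 1 / real (Suc k)"
      have e: "e > 0" unfolding e_def by simp
      have "open ((\<lambda>v. f (x, v)) -` ball (f (x,y)) (e/8))" by (rule ov) simp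
      then obtain b where b: "b \<in> B" "y \<in> b" "b \<subseteq> (\<lambda>v. f (x, v)) -` ball (f (x,y)) (e/8)"
        using topological_basisE[OF B(2)] e by (metis centre_in_ball vimageI2 zero_less_divide_iff zero_less_numeral)
      have "x \<in> Aset f b (e/4)" unfolding Aset_def
      proof (intro CollectI ballI)
        fix z1 z2 assume "z1 \<in> b" "z2 \<in> b"
        then have "dist (f (x,y)) (f (x,z1)) < e/8" "dist (f (x,y)) (f (x,z2)) < e/8" using b(3) by auto
        then show "dist (f (x,z1)) (f (x,z2)) \<le> e/4"
          using dist_triangle3[of "f (x,z1)" "f (x,z2)" "f (x,y)"] by linarith
      qed
      then have "x \<in> Oset f b e" using R(2) xR b(1) unfolding e_def by blast
      then obtain U where U: "open U" "x \<in> U"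
        "\<forall>x1\<in>U. \<forall>x2\<in>U. \<forall>z1\<in>b. \<forall>z2\<in>b. dist (f (x1,z1)) (f (x2,z2)) \<le> e"
        unfolding Oset_def by blast
      show "\<forall>\<^sub>F p in at (x, y). dist (f p) (f (x, y)) < \<epsilon>"
        unfolding eventually_at_topological
      proof (intro exI[of _ "U \<times> b"] conjI)
        show "open (U \<times> b)" using U(1) Bo[OF b(1)] by (simp add: open_Times)
        show "(x, y) \<in> U \<times> b" using U b by simp
        show "\<forall>p\<in>U \<times> b. p \<noteq> (x, y) \<longrightarrow> p \<in> UNIV \<longrightarrow> dist (f p) (f (x, y)) < \<epsilon>"
          using U(3) U(2) b(2) k unfolding e_def by fastforce
      qed
    qed
  qed
  then show "\<exists>R. residual R \<and> (\<forall>x\<in>R. \<forall>y. (f \<longlongrightarrow> f (x, y)) (at (x, y)))" using R by blast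
next
  assume H: "(\<exists>P::'b set set. countable P \<and> pseudobase P) \<and>
     (\<forall>x. quasicont (\<lambda>y. f (x, y)) \<and>
          (\<exists>D. dense_set D \<and> (\<forall>y\<in>D. quasicont_at (\<lambda>x'. f (x', y)) x)))"
  then obtain P :: "'b set set" where P: "countable P" "pseudobase P" by blast
  have qf: "\<And>x. quasicont (\<lambda>y. f (x, y))" using H by blast
  obtain D where D: "\<And>x. dense_set (D x)" "\<And>x y. y \<in> D x \<Longrightarrow> quasicont_at (\<lambda>x'. f (x', y)) x"
    using H by metis
  have Po: "\<And>p. p \<in> P \<Longrightarrow> open p" using P(2) unfolding pseudobase_def by blast
  obtain R where R: "residual R" "\<forall>x\<in>R. \<forall>p\<in>P. \<forall>k::nat.
           x \<in> Aset f p (1 / real (Suc k) / 4) \<longrightarrow> x \<in> Oset f p (1 / real (Suc k))"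
    using residual_lemma[of f D P, OF qf D(1) D(2) P(1) Po] by blast
  have "\<forall>x\<in>R. \<forall>y. quasicont_wrt_x f x y"
  proof (intro ballI allI)
    fix x y assume xR: "x \<in> R"
    show "quasicont_wrt_x f x y" unfolding quasicont_wrt_x_def
    proof (intro allI impI)
      fix V \<epsilon> assume V: "open V \<and> y \<in> V \<and> (\<epsilon>::real) > 0"
      then obtain k :: nat where k: "1 / real (Suc k) < \<epsilon>/2" using small_k[of "\<epsilon>/2"] by auto
      define e where "e = 1 / real (Suc k)"
      have ke: "e < \<epsilon>/2" using k unfolding e_def .
      have e: "e > 0" unfolding e_def by simp
      have "quasicont_at (\<lambda>y. f (x, y)) y" using qf unfolding quasicont_def by blast
      then obtain Q where Q: "open Q" "Q \<noteq> {}" "Q \<subseteq> V"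
            "(\<lambda>v. f (x, v)) ` Q \<subseteq> ball (f (x,y)) (e/8)"
        unfolding quasicont_at_def using V e
        by (metis centre_in_ball open_ball zero_less_divide_iff zero_less_numeral)
      then obtain p where p: "p \<in> P" "p \<subseteq> Q" using P(2) unfolding pseudobase_def by blast
      have pne: "p \<noteq> {}" "open p" using P(2) p(1) unfolding pseudobase_def by auto
      have "x \<in> Aset f p (e/4)" unfolding Aset_def
      proof (intro CollectI ballI)
        fix z1 z2 assume "z1 \<in> p" "z2 \<in> p"
        then have "dist (f (x,y)) (f (x,z1)) < e/8" "dist (f (x,y)) (f (x,z2)) < e/8" using Q(4) p(2) by (auto simp del: mem_ball simp: mem_ball[symmetric]) (auto simp: subset_iff)
        then show "dist (f (x,z1)) (f (x,z2)) \<le> e/4"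
          using dist_triangle3[of "f (x,z1)" "f (x,z2)" "f (x,y)"] by linarith
      qed
      then have "x \<in> Oset f p e" using R(2) xR p(1) unfolding e_def by blast
      then obtain U where U: "open U" "x \<in> U"
        "\<forall>x1\<in>U. \<forall>x2\<in>U. \<forall>z1\<in>p. \<forall>z2\<in>p. dist (f (x1,z1)) (f (x2,z2)) \<le> e"
        unfolding Oset_def by blast
      obtain z0 where z0: "z0 \<in> p" using pne by blast
      have "\<forall>x1\<in>U. \<forall>y1\<in>p. dist (f (x, y)) (f (x1, y1)) \<le> \<epsilon>"
      proof (intro ballI)
        fix x1 y1 assume "x1 \<in> U" "y1 \<in> p"
        then have "dist (f (x,z0)) (f (x1,y1)) \<le> e" using U z0 by blast
        moreover have "dist (f (x,y)) (f (x,z0)) < e/8" using Q(4) p(2) z0 by (metis image_subset_iff mem_ball subsetD)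
        ultimately show "dist (f (x, y)) (f (x1, y1)) \<le> \<epsilon>"
          using dist_triangle[of "f (x,y)" "f (x1,y1)" "f (x,z0)"] ke e by linarith
      qed
      then show "\<exists>U' Q'. open U' \<and> x \<in> U' \<and> open Q' \<and> Q' \<noteq> {} \<and> Q' \<subseteq> V \<and>
               (\<forall>x'\<in>U'. \<forall>y'\<in>Q'. dist (f (x, y)) (f (x', y')) \<le> \<epsilon>)"
        using U(1,2) pne p(2) Q(3) by blast
    qed
  qed
  then show "\<exists>R. residual R \<and> (\<forall>x\<in>R. \<forall>y. quasicont_wrt_x f x y)" using R by blast
qed

end
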